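(* Let $\mu\in\mathbb C$ and $p_{x1},p_{01}\in\mathbb C$ be fixed, and regard $d$ as a function of $\nu$ defined by the formulas in the context. (1) If $2\mu$ is not an odd integer, then $d=D(\nu)$ (formula (F) of the context) expands as a Taylor series $d=\sum_{n\ge1}d_n\nu^n$, $d_n\in\mathbb C$, convergent for $\nu$ sufficiently small, with $$d_1=2\gamma-4\ln2+\frac{i\pi}2+2\psi\Big(\mu+\frac12\Big)-\pi\tan(\pi\mu)+\frac{i\pi(p_{x1}-p_{01})}{8\cos^2(\pi\mu)},$$ where $\gamma$ is Euler's constant and $\psi=\Gamma'/\Gamma$. (2) For an integer $m\ge1$, $d=D_1(\nu;m)$ (the formula used when $2\mu=2i\nu+1-2m$ or $2\mu=-2i\nu+2m-1$) expands, for $\nu$ sufficiently small, as a convergent series $$d=-\frac i2\ln\Big(\frac{2-p_{x1}}4\Big)+2\big(\psi(m)+\gamma-2\ln2\big)\nu+\sum_{n\ge2}d_n\nu^n,\qquad d_n\in\mathbb C.$$ (3) For an integer $m\le0$, $d=D_2(\nu;m)$ (the formula used when $2\mu=2i\nu+1-2m$ with $m\le-1$, or $2\mu=-2i\nu+2m-1$ with $m\le0$) expands, for $\nu$ sufficiently small, as a convergent series $$d=\frac i2\ln\Big(\frac{2-p_{x1}}4\Big)+2\big(\psi(1-m)+\gamma-2\ln2\big)\nu+\sum_{n\ge2}d_n\nu^n,\qquad d_n\in\mathbb C.$$ Here $\psi(m)+\gamma=\sum_{k=1}^{m-1}\frac1k$ for positive integers $m$.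
   Context: For the Painlevé VI equation $PVI_\mu$ (parameters $\alpha=(2\mu-1)^2/2$, $\beta=\gamma=0$, $\delta=1/2$), the branches near $x=0$ of the form $\frac1{y(x)}=\sum_{n\ge1}x^{n-1}\sum_{m=-n}^nA_{nm}(\nu,\mu)e^{2imd}x^{2im\nu}$ ($\nu>0$) are parametrized by monodromy data $(\mu,p_{0x},p_{01},p_{x1})$ of the associated isomonodromic Fuchsian system via $p_{0x}=-2\cosh(2\pi\nu)$ and the following formulas for $d$ (each defined modulo $\pi$): (F) if $2\mu\ne 2i\nu+2m+1$ for all $m\in\mathbb Z$: $$D(\nu)=\frac i2\ln\Big\{-\frac{4\cdot16^{2i\nu}\Gamma(\frac32-\mu-i\nu)^2\Gamma(\mu+\frac12-i\nu)^2}{(2\nu+i(1-2\mu))^2\nu^2\sinh(2\pi\nu)^2\Gamma(-i\nu)^4}\Big[\tfrac12(e^{2\pi\nu}p_{x1}-p_{01})\sinh(2\pi\nu)+(\cos(2\pi\mu)+1)(e^{2\pi\nu}+1)\Big]\Big\};$$ if $2\mu=2i\nu+1-2m$ with $m\ge1$, or $2\mu=-2i\nu+2m-1$ with $m\ge1$: $$D_1(\nu;m)=-\frac i2\ln\Big\{\frac{\nu^2\Gamma(m)^2\Gamma(2i\nu+1-m)^2}{16^{2i\nu}\Gamma(1+i\nu)^4}(p_{x1}-2)\Big\};$$ if $2\mu=2i\nu+1-2m$ with $m\le-1$, or $2\mu=-2i\nu+2m-1$ with $m\le0$: $$D_2(\nu;m)=\frac i2\ln\Big\{\frac{\sinh(\pi\nu)^4\,16^{2i\nu}\Gamma(1-m)^2\Gamma(1+i\nu)^4\Gamma(m-2i\nu)^2}{\nu^2\pi^4}(p_{x1}-2)\Big\}.$$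 *)

theory Defs
  imports "HOL-Analysis.Analysis"
begin

text \<open>Arguments of the logarithms in the formulas (F), D_1, D_2 for the
parameter d of PVI_mu, as functions of the real variable nu.
In each case d is defined modulo pi:
  (F)   d = (i/2) ln XF        i.e.  exp(-2 i d) = XF
  (D1)  d = -(i/2) ln XD1      i.e.  exp( 2 i d) = XD1
  (D2)  d = (i/2) ln XD2       i.e.  exp(-2 i d) = XD2\<close>

definition XF :: "complex \<Rightarrow> complex \<Rightarrow> complex \<Rightarrow> real \<Rightarrow> complex" where
  "XF \<mu> px1 p01 \<nu> =
    (let v = complex_of_real \<nu>; \<pi> = complex_of_real pi in
      - (4 * 16 powr (2 * \<i> * v) * Gamma (3/2 - \<mu> - \<i> * v) ^ 2 * Gamma (\<mu> + 1/2 - \<i> * v) ^ 2)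
        / ((2 * v + \<i> * (1 - 2 * \<mu>)) ^ 2 * v ^ 2 * sinh (2 * \<pi> * v) ^ 2 * Gamma (- \<i> * v) ^ 4)
      * ((1/2) * (exp (2 * \<pi> * v) * px1 - p01) * sinh (2 * \<pi> * v)
         + (cos (2 * \<pi> * \<mu>) + 1) * (exp (2 * \<pi> * v) + 1)))"

definition XD1 :: "int \<Rightarrow> complex \<Rightarrow> real \<Rightarrow> complex" where
  "XD1 m px1 \<nu> =
    (let v = complex_of_real \<nu> in
      v ^ 2 * Gamma (of_int m) ^ 2 * Gamma (2 * \<i> * v + 1 - of_int m) ^ 2
        / (16 powr (2 * \<i> * v) * Gamma (1 + \<i> * v) ^ 4) * (px1 - 2))"

definition XD2 :: "int \<Rightarrow> complex \<Rightarrow> real \<Rightarrow> complex" where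
  "XD2 m px1 \<nu> =
    (let v = complex_of_real \<nu>; \<pi> = complex_of_real pi in
      sinh (\<pi> * v) ^ 4 * 16 powr (2 * \<i> * v) * Gamma (1 - of_int m) ^ 2
        * Gamma (1 + \<i> * v) ^ 4 * Gamma (of_int m - 2 * \<i> * v) ^ 2
        / (v ^ 2 * \<pi> ^ 4) * (px1 - 2))"

end

theory Submission
  imports Defs "HOL-Complex_Analysis.Complex_Analysis"
begin

definition LD :: "(complex \<Rightarrow> complex) \<Rightarrow> complex \<Rightarrow> complex \<Rightarrow> bool" where
  "LD f a L \<longleftrightarrow> (f has_field_derivative f a * L) (at a)"

lemma log_expansion:
  fixes F :: "complex \<Rightarrow> complex"
  assumes an: "F analytic_on {0}" and nz: "F 0 \<noteq> 0" and k: "k \<noteq> 0"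
    and c0: "exp (k*c0) = F 0" and D: "LD F 0 L"
  shows "\<exists>c. \<exists>r>0. c 0 = c0 \<and> c 1 = L / k \<and>
     (\<forall>z. norm z < r \<longrightarrow> (\<exists>s. (\<lambda>n. c n * z^n) sums s \<and> exp (k * s) = F z))"
proof -
  obtain R where R: "R > 0" "F holomorphic_on ball 0 R"
    using an analytic_at_ball by blast
  have "isCont F 0" using an analytic_at_imp_isCont by blast
  then obtain e where e: "e > 0" "\<And>z. dist z 0 < e \<Longrightarrow> dist (F z) (F 0) < norm (F 0)"
    using nz unfolding continuous_at_eps_delta by (metis zero_less_norm_iff)
  define r where "r = min R e"
  have r: "r > 0" using R e by (simp add: r_def)
  have q: "Re (F z / F 0) > 0" if "z \<in> ball 0 r" for z
  proof -
    have "norm (F z - F 0) < norm (F 0)" using e(2)[of z] that by (simp add: r_def dist_norm)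
    moreover have "F z / F 0 - 1 = (F z - F 0) / F 0" using nz by (simp add: diff_divide_distrib)
    ultimately have "norm (F z / F 0 - 1) < 1" using nz
      by (simp add: norm_divide divide_less_eq)
    hence "\<bar>Re (F z / F 0 - 1)\<bar> < 1" using abs_Re_le_cmod le_less_trans by blast
    thus ?thesis by simp
  qed
  define G where "G z = c0 + Ln (F z / F 0) / k" for z
  have hol: "G holomorphic_on ball 0 r"
  proof -
    have h1: "F holomorphic_on ball 0 r"
      using R(2) by (rule holomorphic_on_subset) (auto simp: r_def)
    have h2: "(\<lambda>z. F z / F 0) holomorphic_on ball 0 r"
      using h1 by (intro holomorphic_on_divide holomorphic_on_const) (simp_all add: nz)
    have h3: "F z / F 0 \<notin> \<real>\<^sub>\<le>\<^sub>0" if "z \<in> ball 0 r" for z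
      using q[OF that] by (auto elim!: nonpos_Reals_cases)
    have "(\<lambda>z. Ln (F z / F 0)) holomorphic_on ball 0 r"
      by (rule holomorphic_on_Ln'[OF h3 h2])
    thus ?thesis unfolding G_def
      by (intro holomorphic_on_add holomorphic_on_const holomorphic_on_divide) (simp_all add: k)
  qed
  define c where "c n = (deriv ^^ n) G 0 / fact n" for n
  have "c 0 = c0" using nz by (simp add: c_def G_def)
  moreover have "(G has_field_derivative L / k) (at 0)"
  proof -
    have "(G has_field_derivative 0 + (F 0 * L / F 0) * inverse (F 0 / F 0) / k) (at 0)"
      unfolding G_def using D unfolding LD_def
      by (intro derivative_eq_intros) (auto simp: nz k)
    thus ?thesis using nz by simp
  qed
  hence "c 1 = L / k" by (simp add: c_def DERIV_imp_deriv)
  moreover have "\<forall>z. norm z < r \<longrightarrow> (\<exists>s. (\<lambda>n. c n * z^n) sums s \<and> exp (k * s) = F z)"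
  proof (intro allI impI)
    fix z :: complex assume z: "norm z < r"
    hence zb: "z \<in> ball 0 r" by simp
    have "(\<lambda>n. c n * z^n) sums G z"
      using holomorphic_power_series[OF hol zb] by (simp add: c_def)
    moreover have "exp (k * G z) = F z"
    proof -
      have "F z / F 0 \<noteq> 0" using q[OF zb] by auto
      hence "exp (k * G z) = exp (k*c0) * exp (Ln (F z / F 0))"
        using k by (simp add: G_def distrib_left exp_add)
      also have "\<dots> = F z" using c0 nz \<open>F z / F 0 \<noteq> 0\<close> by simp
      finally show ?thesis .
    qed
    ultimately show "\<exists>s. (\<lambda>n. c n * z^n) sums s \<and> exp (k * s) = F z" by blast
  qed
  ultimately show ?thesis using r by blast
qed

lemma LD_mult: "LD f a L \<Longrightarrow> LD g a M \<Longrightarrow> LD (\<lambda>z. f z * g z) a (L + M)"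
  unfolding LD_def
  by (rule DERIV_cong[OF DERIV_mult]) (auto simp: algebra_simps)

lemma LD_divide: "LD f a L \<Longrightarrow> LD g a M \<Longrightarrow> g a \<noteq> 0 \<Longrightarrow> LD (\<lambda>z. f z / g z) a (L - M)"
  unfolding LD_def
  by (rule DERIV_cong[OF DERIV_divide]) (auto simp: field_simps power2_eq_square)

lemma LD_power: assumes "LD f a L" shows "LD (\<lambda>z. f z ^ n) a (of_nat n * L)"
proof (cases n)
  case 0 thus ?thesis by (simp add: LD_def)
next
  case (Suc m)
  have "(f has_field_derivative f a * L) (at a)" using assms by (simp add: LD_def)
  from DERIV_power[OF this, of n] show ?thesis unfolding LD_def
    by (rule DERIV_cong) (simp add: Suc algebra_simps)
qed

lemma LD_lin: "a \<noteq> c \<Longrightarrow> LD (\<lambda>w. w - c) a (1 / (a - c))"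
  unfolding LD_def by (auto intro!: derivative_eq_intros)

lemma LD_const: "LD (\<lambda>z. c) a 0"
  unfolding LD_def by simp

lemma LD_minus: "LD f a L \<Longrightarrow> LD (\<lambda>z. - f z) a L"
  unfolding LD_def using DERIV_minus[of f "f a * L" a] by simp

lemma LD_intro: "(f has_field_derivative D) (at a) \<Longrightarrow> f a \<noteq> 0 \<Longrightarrow> LD f a (D / f a)"
  unfolding LD_def by simp

lemma LD_comp: assumes "LD f (g a) L" "(g has_field_derivative g') (at a)" shows "LD (\<lambda>z. f (g z)) a (g' * L)"
proof -
  have a1: "(f has_field_derivative f (g a) * L) (at (g a))" using assms(1) by (simp add: LD_def)
  from DERIV_chain2[OF a1 assms(2)] show ?thesis unfolding LD_def by (rule DERIV_cong) (simp add: algebra_simps)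
qed

lemma LD_Gamma: "(g has_field_derivative g') (at a) \<Longrightarrow> g a \<notin> \<int>\<^sub>\<le>\<^sub>0 \<Longrightarrow>
   LD (\<lambda>z. Gamma (g z :: complex)) a (g' * Digamma (g a))"
  unfolding LD_def
  by (rule DERIV_cong[OF DERIV_chain2[OF has_field_derivative_Gamma]]) (auto simp: algebra_simps)

lemma LD_rGamma: "(g has_field_derivative g') (at a) \<Longrightarrow> g a \<notin> \<int>\<^sub>\<le>\<^sub>0 \<Longrightarrow>
   LD (\<lambda>z. rGamma (g z :: complex)) a (- g' * Digamma (g a))"
  unfolding LD_def
  by (rule DERIV_cong[OF DERIV_chain2[OF has_field_derivative_rGamma_no_nonpos_int]]) (auto simp: algebra_simps)

lemma LD_exp: "(g has_field_derivative g') (at a) \<Longrightarrow> LD (\<lambda>z. exp (g z :: complex)) a g'"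
  unfolding LD_def
  by (rule DERIV_cong[OF DERIV_chain2[OF DERIV_exp]]) (auto simp: algebra_simps)

lemma sinh_rGamma: "sinh (of_real pi * z) = of_real pi * z * rGamma (1 + \<i>*z) * rGamma (1 - \<i>*z)"
proof -
  have "rGamma (\<i>*z) * rGamma (1 - \<i>*z) = sin (of_real pi * (\<i>*z)) / of_real pi"
    by (rule rGamma_reflection_complex)
  also have "of_real pi * (\<i>*z) = \<i> * (of_real pi * z)" by simp
  finally have "rGamma (\<i>*z) * rGamma (1 - \<i>*z) = sin (\<i> * (of_real pi * z)) / of_real pi" .
  moreover have "rGamma (\<i>*z) = \<i>*z * rGamma (\<i>*z + 1)" by (simp add: rGamma_plus1)
  ultimately have "sin (\<i> * (of_real pi * z)) = of_real pi * (\<i>*z) * rGamma (1 + \<i>*z) * rGamma (1 - \<i>*z)"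
    by (simp add: field_simps add.commute)
  hence "sinh (of_real pi * z) = - \<i> * (of_real pi * (\<i> * z) * rGamma (1 + \<i>*z) * rGamma (1 - \<i>*z))"
    by (simp add: sinh_conv_sin)
  also have "\<dots> = of_real pi * z * rGamma (1 + \<i>*z) * rGamma (1 - \<i>*z) * (\<i> * (- \<i>))"
    by (simp only: ac_simps)
  finally show ?thesis by simp
qed

definition Q :: "nat \<Rightarrow> complex \<Rightarrow> complex" where
  "Q n w = (\<Prod>k=1..n. (w - of_nat k))"

lemma Q_Suc: "Q (Suc n) w = Q n w * (w - of_nat (Suc n))"
  by (simp add: Q_def)

lemma pochhammer_Q: "pochhammer (w - of_nat n) n = Q n w"
proof (induction n arbitrary: w)
  case 0 thus ?case by (simp add: Q_def)
next
  case (Suc n)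
  have "pochhammer (w - of_nat (Suc n)) (Suc n) = (w - of_nat (Suc n)) * pochhammer (w - of_nat n) n"
    by (subst pochhammer_rec) (simp add: algebra_simps)
  thus ?case by (simp add: Suc Q_Suc mult.commute)
qed

lemma Q_nz: "Im w \<noteq> 0 \<Longrightarrow> Q n w \<noteq> 0"
  unfolding Q_def by (subst prod_zero_iff) (auto simp: complex_eq_iff)

lemma Q0: "Q n 0 ^ 2 = (fact n) ^ 2"
proof (induction n)
  case 0 thus ?case by (simp add: Q_def)
next
  case (Suc n)
  then show ?case by (simp add: Q_Suc power_mult_distrib power2_eq_square algebra_simps)
qed

lemma Q0_nz: "Q n 0 \<noteq> 0"
  using Q0[of n] by (metis fact_nonzero of_nat_eq_0_iff of_nat_fact zero_eq_power2)

lemma LD_Q: "LD (Q n) 0 (- harm n)"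
proof (induction n)
  case 0
  have "Q 0 = (\<lambda>_. 1)" by (simp add: Q_def fun_eq_iff)
  thus ?case unfolding LD_def by (simp add: harm_def)
next
  case (Suc n)
  have "LD (\<lambda>w. Q n w * (w - of_nat (Suc n))) 0 (- harm n + 1 / (0 - of_nat (Suc n)))"
    by (intro LD_mult Suc LD_lin) (auto simp: complex_eq_iff)
  moreover have "Q (Suc n) = (\<lambda>w. Q n w * (w - of_nat (Suc n)))" by (simp add: fun_eq_iff Q_Suc)
  moreover have "- harm n + 1 / (0 - of_nat (Suc n)) = - (harm (Suc n) :: complex)"
  proof -
    have e: "(0 - of_nat (Suc n) :: complex) = - (1 + of_nat n)" by simp
    show ?thesis unfolding e divide_minus_right by (simp add: harm_Suc inverse_eq_divide add.commute)
  qed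
  ultimately show ?case by simp
qed

lemma Gamma_shift: assumes "w \<notin> \<int>"
  shows "Gamma (w - of_nat n) * w * Q n w = Gamma (w + 1)"
proof -
  have "w - of_nat n \<notin> \<int>\<^sub>\<le>\<^sub>0"
  proof
    assume "w - of_nat n \<in> \<int>\<^sub>\<le>\<^sub>0"
    then obtain k where "w - of_nat n = - of_nat k" by (auto elim!: nonpos_Ints_cases')
    hence "w = of_int (int n - int k)" by (simp add: algebra_simps)
    hence "w \<in> \<int>" by simp
    thus False using assms by simp
  qed
  hence "pochhammer (w - of_nat n) (Suc n) = Gamma (w - of_nat n + of_nat (Suc n)) / Gamma (w - of_nat n)"
    by (rule pochhammer_Gamma)
  moreover have "pochhammer (w - of_nat n) (Suc n) = Q n w * w"
    by (simp add: pochhammer_Suc pochhammer_Q)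
  moreover have "Gamma (w - of_nat n) \<noteq> 0" using \<open>w - of_nat n \<notin> \<int>\<^sub>\<le>\<^sub>0\<close> by (rule Gamma_nonzero)
  ultimately show ?thesis by (simp add: field_simps)
qed

lemma LD_cong: "LD f a L \<Longrightarrow> L = L' \<Longrightarrow> LD f a L'" by simp

lemma LD_Gamma_lin: "b \<notin> \<int>\<^sub>\<le>\<^sub>0 \<Longrightarrow> LD (\<lambda>z. Gamma (b + c*z)) 0 (c * Digamma b)"
proof -
  assume b: "b \<notin> \<int>\<^sub>\<le>\<^sub>0"
  have "((\<lambda>z. b + c*z) has_field_derivative c) (at 0)" by (auto intro!: derivative_eq_intros)
  from LD_Gamma[OF this] show ?thesis using b by simp
qed

lemma LD_rGamma_lin: "b \<notin> \<int>\<^sub>\<le>\<^sub>0 \<Longrightarrow> LD (\<lambda>z. rGamma (b + c*z)) 0 (- c * Digamma b)"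
proof -
  assume b: "b \<notin> \<int>\<^sub>\<le>\<^sub>0"
  have "((\<lambda>z. b + c*z) has_field_derivative c) (at 0)" by (auto intro!: derivative_eq_intros)
  from LD_rGamma[OF this] show ?thesis using b by simp
qed

lemma LD_exp_lin: "LD (\<lambda>z. exp (c*z*d)) 0 (c*d)"
proof -
  have "((\<lambda>z. c*z*d) has_field_derivative c*d) (at 0)" by (auto intro!: derivative_eq_intros)
  from LD_exp[OF this] show ?thesis .
qed

lemma LD_Qc: "LD (\<lambda>z. Q n (c*z)) 0 (c * - harm n)"
  using LD_comp[of "Q n" "\<lambda>z. c*z" 0 "- harm n" c] LD_Q[of n]
  by (auto intro!: derivative_eq_intros)

lemma Q_analytic [analytic_intros]: "f analytic_on A \<Longrightarrow> (\<lambda>z. Q n (f z)) analytic_on A"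
  unfolding Q_def by (intro analytic_intros) auto

lemma pow16: "(16::complex) powr w = exp (w * of_real (4 * ln 2))"
proof -
  have "ln (16::complex) = of_real (ln 16)" using Ln_of_real[of 16] by simp
  also have "ln (16::real) = ln (2^4)" by simp
  also have "\<dots> = 4 * ln 2" by (subst ln_realpow) auto
  finally show ?thesis by (simp add: powr_def)
qed

lemma XD1_eq:
  assumes "\<nu> \<noteq> 0"
  shows "XD1 (int n + 1) px1 \<nu> = (let z = complex_of_real \<nu> in
     - (Gamma (of_nat n + 1)^2 * Gamma (1 + 2*\<i>*z)^2 * (px1 - 2)) /
       (4 * Q n (2*\<i>*z)^2 * exp (2*\<i>*z * of_real (4*ln 2)) * Gamma (1 + \<i>*z)^4))"
proof -
  define v where "v = complex_of_real \<nu>"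
  define w where "w = 2*\<i>* v"
  have wI: "w \<notin> \<int>" using assms by (auto simp: w_def v_def elim!: Ints_cases simp: complex_eq_iff)
  have Qnz: "Q n w \<noteq> 0" using assms by (intro Q_nz) (simp add: w_def v_def)
  have G1: "Gamma (1 + \<i>* v) \<noteq> 0"
    using assms by (intro Gamma_nonzero) (auto simp: v_def complex_eq_iff elim!: nonpos_Ints_cases')
  have sh: "Gamma (w - of_nat n) * w * Q n w = Gamma (w + 1)" by (rule Gamma_shift[OF wI])
  have arg: "2 * \<i> * v + 1 - of_int (int n + 1) = w - of_nat n" by (simp add: w_def)
  have key: "v * Gamma (w - of_nat n) = Gamma (1 + w) / (2*\<i> * Q n w)"
    using sh Qnz by (simp add: w_def field_simps)
  have "XD1 (int n + 1) px1 \<nu> = (v * Gamma (w - of_nat n))^2 * Gamma (of_nat n + 1) ^ 2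
        / (exp (2*\<i>* v * of_real (4*ln 2)) * Gamma (1 + \<i>* v)^4) * (px1 - 2)"
    unfolding XD1_def Let_def v_def[symmetric] arg pow16
    by (simp add: power_mult_distrib algebra_simps)
  also have "\<dots> = - (Gamma (of_nat n + 1)^2 * Gamma (1 + w)^2 * (px1 - 2)) /
       (4 * Q n w^2 * exp (2*\<i>* v * of_real (4*ln 2)) * Gamma (1 + \<i>* v)^4)"
    unfolding key using Qnz G1 by (simp add: field_simps power2_eq_square)
  finally show ?thesis by (simp add: Let_def v_def w_def)
qed

lemma part2:
  assumes m: "m \<ge> 1" and p: "px1 \<noteq> 2"
  shows "\<exists>c :: nat \<Rightarrow> complex. \<exists>r::real > 0.
         c 0 = - (\<i> / 2) * Ln ((2 - px1) / 4) \<and>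
         c 1 = 2 * (Digamma (of_int m) + euler_mascheroni - 2 * complex_of_real (ln 2)) \<and>
         (\<forall>\<nu>::real. \<nu> \<noteq> 0 \<and> \<bar>\<nu>\<bar> < r \<longrightarrow>
            (\<exists>s. (\<lambda>n. c n * complex_of_real \<nu> ^ n) sums s \<and>
                 exp (2 * \<i> * s) = XD1 m px1 \<nu>))"
proof -
  obtain n where n: "m = int n + 1" using m by (metis add.commute int_nat_eq le_add_diff_inverse2 nat_int zle_iff_zadd)
  define F where "F z = - (Gamma (of_nat n + 1)^2 * Gamma (1 + 2*\<i>*z)^2 * (px1 - 2)) /
       (4 * Q n (2*\<i>*z)^2 * exp (2*\<i>*z * of_real (4*ln 2)) * Gamma (1 + \<i>*z)^4)" for z
  have G1: "Gamma (1::complex) \<noteq> 0" by simp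
  have Gn: "Gamma (of_nat n + 1 :: complex) = fact n" using Gamma_fact[of n] by (simp add: add.commute)
  have F0: "F 0 = (2 - px1) / 4"
    using Q0[of n] Q0_nz[of n] by (simp add: F_def Gamma_fact field_simps)
  have F0nz: "F 0 \<noteq> 0" using p by (simp add: F0)
  have an: "F analytic_on {0}"
    unfolding F_def using Q0_nz[of n] by (intro analytic_intros) auto
  have "of_int m = (of_nat (Suc n) :: complex)" by (simp add: n)
  hence Dm: "Digamma (of_int m :: complex) = harm n - euler_mascheroni"
    by (simp only: Digamma_of_nat)
  define L where "L = 2 * \<i> * (2 * (Digamma (of_int m) + euler_mascheroni - 2 * complex_of_real (ln 2)))"
  have LD: "LD F 0 L"
    unfolding F_def[abs_def]
    apply (rule LD_cong)
     apply ((rule LD_const LD_divide LD_minus LD_mult LD_power LD_Gamma_lin LD_exp_lin LD_Qc) | (simp add: Q0_nz))+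
    apply (simp add: L_def Dm algebra_simps)
    done
  have c0: "exp (2*\<i> * (- (\<i> / 2) * Ln ((2 - px1) / 4))) = F 0"
    using p by (simp add: F0)
  obtain c r where cr: "r > 0" "c 0 = - (\<i> / 2) * Ln ((2 - px1) / 4)" "c 1 = L / (2*\<i>)"
    "\<forall>z. norm z < r \<longrightarrow> (\<exists>s. (\<lambda>n. c n * z^n) sums s \<and> exp (2*\<i> * s) = F z)"
    using log_expansion[OF an F0nz _ c0 LD] by auto
  show ?thesis
  proof (intro exI[of _ c] exI[of _ r] conjI allI impI)
    show "c 1 = 2 * (Digamma (of_int m) + euler_mascheroni - 2 * complex_of_real (ln 2))"
      using cr(3) by (simp add: L_def)
    fix \<nu> :: real assume a: "\<nu> \<noteq> 0 \<and> \<bar>\<nu>\<bar> < r"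
    then obtain s where "(\<lambda>n. c n * complex_of_real \<nu>^n) sums s" "exp (2*\<i> * s) = F (of_real \<nu>)"
      using cr(4)[rule_format, of "of_real \<nu>"] by auto
    moreover have "F (of_real \<nu>) = XD1 m px1 \<nu>"
      using XD1_eq[of \<nu> n px1] a by (simp add: n F_def Let_def)
    ultimately show "\<exists>s. (\<lambda>n. c n * complex_of_real \<nu> ^ n) sums s \<and> exp (2 * \<i> * s) = XD1 m px1 \<nu>"
      by auto
  qed (use cr in auto)
qed

lemma XD2_eq:
  assumes "\<nu> \<noteq> 0"
  shows "XD2 (- int n) px1 \<nu> = (let z = complex_of_real \<nu> in
     - (rGamma (1 + \<i>*z)^4 * rGamma (1 + (-\<i>)*z)^4 * exp (2*\<i>*z * of_real (4*ln 2))
        * Gamma (of_nat n + 1)^2 * Gamma (1 + \<i>*z)^4 * Gamma (1 + (-2*\<i>)*z)^2 * (px1 - 2))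
       / (4 * Q n ((-2*\<i>)*z)^2))"
proof -
  define v where "v = complex_of_real \<nu>"
  define w where "w = (-2*\<i>) * v"
  have vnz: "v \<noteq> 0" using assms by (simp add: v_def)
  have wI: "w \<notin> \<int>" using assms by (auto simp: w_def v_def elim!: Ints_cases simp: complex_eq_iff)
  have Qnz: "Q n w \<noteq> 0" using assms by (intro Q_nz) (simp add: w_def v_def)
  have sh: "Gamma (w - of_nat n) * w * Q n w = Gamma (w + 1)" by (rule Gamma_shift[OF wI])
  have arg: "of_int (- int n) - 2 * \<i> * v = w - of_nat n" by (simp add: w_def)
  have arg2: "1 - of_int (- int n) = (of_nat n + 1 :: complex)" by simp
  have "\<i> * Gamma (1 + w) = \<i> * (Gamma (w - of_nat n) * w * Q n w)" using sh by (simp add: add.commute)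
  also have "\<dots> = (\<i> * \<i>) * (-2) * (v * Gamma (w - of_nat n) * Q n w)" by (simp only: w_def ac_simps)
  also have "\<dots> = v * Gamma (w - of_nat n) * (2 * Q n w)" by simp
  finally have key: "v * Gamma (w - of_nat n) = \<i> * Gamma (1 + w) / (2 * Q n w)"
    using Qnz by (simp add: field_simps)
  have shv: "sinh (complex_of_real pi * v) = of_real pi * v * rGamma (1 + \<i>* v) * rGamma (1 + (-\<i>)* v)"
    using sinh_rGamma[of v] by simp
  have "XD2 (- int n) px1 \<nu> = (rGamma (1 + \<i>* v) * rGamma (1 + (-\<i>)* v))^4 * exp (2*\<i>* v * of_real (4*ln 2))
        * Gamma (of_nat n + 1)^2 * Gamma (1 + \<i>* v)^4 * (v * Gamma (w - of_nat n))^2 * (px1 - 2)"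
    unfolding XD2_def Let_def v_def[symmetric] arg arg2 pow16 shv
    using vnz by (simp add: power_mult_distrib field_simps power2_eq_square power4_eq_xxxx[of v])
  also have "\<dots> = - (rGamma (1 + \<i>* v)^4 * rGamma (1 + (-\<i>)* v)^4 * exp (2*\<i>* v * of_real (4*ln 2))
        * Gamma (of_nat n + 1)^2 * Gamma (1 + \<i>* v)^4 * Gamma (1 + w)^2 * (px1 - 2))
       / (4 * Q n w^2)"
    unfolding key using Qnz by (simp add: field_simps power2_eq_square power_mult_distrib)
  finally show ?thesis by (simp add: Let_def v_def w_def)
qed

lemma part3:
  assumes m: "m \<le> 0" and p: "px1 \<noteq> 2"
  shows "\<exists>c :: nat \<Rightarrow> complex. \<exists>r::real > 0.
         c 0 = (\<i> / 2) * Ln ((2 - px1) / 4) \<and>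
         c 1 = 2 * (Digamma (1 - of_int m) + euler_mascheroni - 2 * complex_of_real (ln 2)) \<and>
         (\<forall>\<nu>::real. \<nu> \<noteq> 0 \<and> \<bar>\<nu>\<bar> < r \<longrightarrow>
            (\<exists>s. (\<lambda>n. c n * complex_of_real \<nu> ^ n) sums s \<and>
                 exp (- 2 * \<i> * s) = XD2 m px1 \<nu>))"
proof -
  obtain n where n: "m = - int n" using m by (metis minus_minus nat_0_le neg_0_le_iff_le)
  define F where "F z = - (rGamma (1 + \<i>*z)^4 * rGamma (1 + (-\<i>)*z)^4 * exp (2*\<i>*z * of_real (4*ln 2))
        * Gamma (of_nat n + 1)^2 * Gamma (1 + \<i>*z)^4 * Gamma (1 + (-2*\<i>)*z)^2 * (px1 - 2))
       / (4 * Q n ((-2*\<i>)*z)^2)" for z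
  have F0: "F 0 = (2 - px1) / 4"
    using Q0[of n] Q0_nz[of n] by (simp add: F_def Gamma_fact field_simps)
  have F0nz: "F 0 \<noteq> 0" using p by (simp add: F0)
  have an: "F analytic_on {0}"
    unfolding F_def using Q0_nz[of n] by (intro analytic_intros) auto
  have "1 - of_int m = (of_nat (Suc n) :: complex)" by (simp add: n)
  hence Dm: "Digamma (1 - of_int m :: complex) = harm n - euler_mascheroni"
    by (simp only: Digamma_of_nat)
  define L where "L = - 2 * \<i> * (2 * (Digamma (1 - of_int m) + euler_mascheroni - 2 * complex_of_real (ln 2)))"
  have LD: "LD F 0 L"
    unfolding F_def[abs_def]
    apply (rule LD_cong)
     apply ((rule LD_const LD_divide LD_minus LD_mult LD_power LD_Gamma_lin LD_rGamma_lin LD_exp_lin LD_Qc) | (simp add: Q0_nz))+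
    apply (simp add: L_def Dm algebra_simps)
    done
  have c0: "exp (- 2*\<i> * ((\<i> / 2) * Ln ((2 - px1) / 4))) = F 0"
    using p by (simp add: F0)
  obtain c r where cr: "r > 0" "c 0 = (\<i> / 2) * Ln ((2 - px1) / 4)" "c 1 = L / (- 2*\<i>)"
    "\<forall>z. norm z < r \<longrightarrow> (\<exists>s. (\<lambda>n. c n * z^n) sums s \<and> exp (- 2*\<i> * s) = F z)"
    using log_expansion[OF an F0nz _ c0 LD] by auto
  show ?thesis
  proof (intro exI[of _ c] exI[of _ r] conjI allI impI)
    show "c 1 = 2 * (Digamma (1 - of_int m) + euler_mascheroni - 2 * complex_of_real (ln 2))"
      using cr(3) by (simp add: L_def)
    fix \<nu> :: real assume a: "\<nu> \<noteq> 0 \<and> \<bar>\<nu>\<bar> < r"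
    then obtain s where "(\<lambda>n. c n * complex_of_real \<nu>^n) sums s" "exp (- 2*\<i> * s) = F (of_real \<nu>)"
      using cr(4)[rule_format, of "of_real \<nu>"] by auto
    moreover have "F (of_real \<nu>) = XD2 m px1 \<nu>"
      using XD2_eq[of \<nu> n px1] a by (simp add: n F_def Let_def)
    ultimately show "\<exists>s. (\<lambda>n. c n * complex_of_real \<nu> ^ n) sums s \<and> exp (- 2 * \<i> * s) = XD2 m px1 \<nu>"
      by auto
  qed (use cr in auto)
qed

lemma Digamma_refl:
  fixes z :: complex assumes z: "z \<notin> \<int>"
  shows "Digamma (1 - z) - Digamma z = of_real pi * cot (of_real pi * z)"
proof -
  have z1: "z \<notin> \<int>\<^sub>\<le>\<^sub>0" using z nonpos_Ints_subset_Ints by blast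
  have z2: "1 - z \<notin> \<int>\<^sub>\<le>\<^sub>0"
  proof
    assume "1 - z \<in> \<int>\<^sub>\<le>\<^sub>0"
    hence "1 - z \<in> \<int>" using nonpos_Ints_subset_Ints by blast
    hence "1 - (1 - z) \<in> \<int>" by (intro Ints_diff) auto
    thus False using z by simp
  qed
  have d1: "((\<lambda>w. rGamma w * rGamma (1 - w)) has_field_derivative
      (- rGamma z * Digamma z) * rGamma (1 - z) + rGamma z * ((- rGamma (1 - z) * Digamma (1 - z)) * (-1))) (at z)"
  proof -
    have "((\<lambda>w. rGamma (1 - w)) has_field_derivative (- rGamma (1 - z) * Digamma (1 - z)) * (-1)) (at z)"
      by (rule DERIV_chain2[where g="\<lambda>w. 1 - w" and f=rGamma and x=z, OF has_field_derivative_rGamma_no_nonpos_int[OF z2]])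
         (auto intro!: derivative_eq_intros)
    from DERIV_mult[OF has_field_derivative_rGamma_no_nonpos_int[OF z1] this] show ?thesis
      by (rule DERIV_cong) (simp add: algebra_simps)
  qed
  have d2: "((\<lambda>w. sin (of_real pi * w) / of_real pi) has_field_derivative
      cos (of_real pi * z) * of_real pi / of_real pi) (at z)"
    by (auto intro!: derivative_eq_intros)
  have "(\<lambda>w::complex. rGamma w * rGamma (1 - w)) = (\<lambda>w. sin (of_real pi * w) / of_real pi)"
    by (simp add: fun_eq_iff rGamma_reflection_complex)
  with d1 d2 have eq: "(- rGamma z * Digamma z) * rGamma (1 - z) + rGamma z * ((- rGamma (1 - z) * Digamma (1 - z)) * (-1))
      = cos (of_real pi * z) * of_real pi / of_real pi"
    using DERIV_unique by metis
  have sz: "sin (of_real pi * z) \<noteq> 0"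
  proof
    assume "sin (of_real pi * z) = 0"
    then obtain k :: int where "of_real pi * z = of_real (k * pi)" by (auto simp: sin_eq_0)
    hence "z = of_int k" by (simp add: field_simps)
    thus False using z by simp
  qed
  have "rGamma z * rGamma (1 - z) * (Digamma (1 - z) - Digamma z) = cos (of_real pi * z)"
    using eq by (simp add: algebra_simps)
  hence "sin (of_real pi * z) / of_real pi * (Digamma (1 - z) - Digamma z) = cos (of_real pi * z)"
    by (simp add: rGamma_reflection_complex)
  thus ?thesis using sz by (simp add: cot_def field_simps)
qed

lemma LD_intro': "(f has_field_derivative D) (at a) \<Longrightarrow> f a = y \<Longrightarrow> y \<noteq> 0 \<Longrightarrow> LD f a (D / y)"
  unfolding LD_def by simp

lemma LD_poly: "c \<noteq> 0 \<Longrightarrow> LD (\<lambda>z. 2*z + c) 0 (2/c)"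
  unfolding LD_def by (auto intro!: derivative_eq_intros)

lemma LD_B:
  fixes \<mu> px1 p01 :: complex
  assumes C: "cos (2 * complex_of_real pi * \<mu>) + 1 \<noteq> 0"
  shows "LD (\<lambda>z. (1/2) * (exp (2 * complex_of_real pi * z) * px1 - p01) * sinh (2 * complex_of_real pi * z)
         + (cos (2 * complex_of_real pi * \<mu>) + 1) * (exp (2 * complex_of_real pi * z) + 1)) 0
     ((of_real pi * (px1 - p01) + 2 * of_real pi * (cos (2 * complex_of_real pi * \<mu>) + 1))
       / (2 * (cos (2 * complex_of_real pi * \<mu>) + 1)))"
proof -
  have "((\<lambda>z. (1/2) * (exp (2 * complex_of_real pi * z) * px1 - p01) * sinh (2 * complex_of_real pi * z)
         + (cos (2 * complex_of_real pi * \<mu>) + 1) * (exp (2 * complex_of_real pi * z) + 1))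
      has_field_derivative (of_real pi * (px1 - p01) + 2 * of_real pi * (cos (2 * complex_of_real pi * \<mu>) + 1))) (at 0)"
    by (auto intro!: derivative_eq_intros simp: algebra_simps)
  note d = this
  show ?thesis
    apply (rule LD_intro'[OF d])
     apply simp
  proof
    assume "2 * (cos (2 * complex_of_real pi * \<mu>) + 1) = 0"
    thus False using C by (metis (no_types) distrib_left mult_1_right mult_eq_0_iff zero_neq_numeral)
  qed
qed

lemma sin_pi_half_c: "sin (complex_of_real pi / 2) = 1" and cos_pi_half_c: "cos (complex_of_real pi / 2) = 0"
proof -
  have e: "complex_of_real pi / 2 = of_real (pi/2)" by simp
  show "sin (complex_of_real pi / 2) = 1" unfolding e sin_of_real by simp
  show "cos (complex_of_real pi / 2) = 0" unfolding e cos_of_real by simp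
qed

lemma part1_facts:
  fixes \<mu> :: complex
  assumes h: "\<forall>k::int. 2 * \<mu> \<noteq> of_int (2 * k + 1)"
  shows "\<mu> + 1/2 \<notin> \<int>" "3/2 - \<mu> \<notin> \<int>" "1/2 - \<mu> \<notin> \<int>" "1 - 2*\<mu> \<noteq> 0"
    "cos (of_real pi * \<mu>) \<noteq> 0"
proof -
  show b: "\<mu> + 1/2 \<notin> \<int>"
  proof
    assume "\<mu> + 1/2 \<in> \<int>"
    then obtain k where "\<mu> + 1/2 = of_int k" by (auto elim: Ints_cases)
    hence "2 * \<mu> = of_int (2 * (k - 1) + 1)" by (simp add: field_simps)
    thus False using h by blast
  qed
  show "3/2 - \<mu> \<notin> \<int>"
  proof
    assume "3/2 - \<mu> \<in> \<int>"
    with Ints_numeral[of "num.Bit0 num.One"] have "2 - (3/2 - \<mu>) \<in> \<int>" by (rule Ints_diff)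
    hence "\<mu> + 1/2 \<in> \<int>" by (simp add: algebra_simps)
    thus False using b by simp
  qed
  show "1/2 - \<mu> \<notin> \<int>"
  proof
    assume "1/2 - \<mu> \<in> \<int>"
    with Ints_1 have "1 - (1/2 - \<mu>) \<in> \<int>" by (rule Ints_diff)
    hence "\<mu> + 1/2 \<in> \<int>" by (simp add: algebra_simps)
    thus False using b by simp
  qed
  show "1 - 2*\<mu> \<noteq> 0"
  proof
    assume "1 - 2*\<mu> = 0"
    hence "2 * \<mu> = of_int (2 * 0 + 1)" by simp
    thus False using h by blast
  qed
  show "cos (of_real pi * \<mu>) \<noteq> 0"
  proof
    assume "cos (of_real pi * \<mu>) = 0"
    then obtain n :: int where "of_real pi * \<mu> = complex_of_real (n * pi) + of_real pi / 2"
      by (auto simp: cos_eq_0)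
    hence "2 * (of_real pi * \<mu>) = 2 * (complex_of_real (n * pi) + of_real pi / 2)" by simp
    hence "(2 * \<mu> - (2 * of_int n + 1)) * of_real pi = 0" by (simp add: algebra_simps)
    hence "2 * \<mu> = 2 * of_int n + 1" by simp
    thus False using h[rule_format, of n] by simp
  qed
qed

definition F1 :: "complex \<Rightarrow> complex \<Rightarrow> complex \<Rightarrow> complex \<Rightarrow> complex" where
 "F1 \<mu> px1 p01 z = - (4 * exp (2*\<i>*z * of_real (4*ln 2)) * Gamma ((3/2 - \<mu>) + (-\<i>)*z)^2 * Gamma ((\<mu> + 1/2) + (-\<i>)*z)^2)
   / ((2*z + \<i>*(1 - 2*\<mu>))^2 * (2* of_real pi)^2 * rGamma (1 + (2*\<i>)*z)^2 * rGamma (1 + (-2*\<i>)*z)^2 * Gamma (1 + (-\<i>)*z)^4)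
   * ((1/2) * (exp (2 * complex_of_real pi * z) * px1 - p01) * sinh (2 * complex_of_real pi * z)
         + (cos (2 * complex_of_real pi * \<mu>) + 1) * (exp (2 * complex_of_real pi * z) + 1))"

lemma XF_eq:
  assumes "\<nu> \<noteq> 0"
  shows "XF \<mu> px1 p01 \<nu> = F1 \<mu> px1 p01 (of_real \<nu>)"
proof -
  define v where "v = complex_of_real \<nu>"
  have vnz: "v \<noteq> 0" using assms by (simp add: v_def)
  have z: "- \<i> * v \<notin> \<int>\<^sub>\<le>\<^sub>0"
    using assms by (auto simp: v_def complex_eq_iff elim!: nonpos_Ints_cases')
  have g1: "Gamma (1 + (-\<i>) * v) = (- \<i> * v) * Gamma (- \<i> * v)"
    using Gamma_plus1[OF z] by (simp add: add.commute)
  have sh: "sinh (2 * complex_of_real pi * v) = 2 * of_real pi * v * rGamma (1 + (2*\<i>) * v) * rGamma (1 + (-2*\<i>) * v)"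
    using sinh_rGamma[of "2* v"] by (simp add: ac_simps)
  have D1: "(2 * v + \<i> * (1 - 2 * \<mu>))^2 * v^2 * sinh (2 * complex_of_real pi * v)^2 * Gamma (- \<i> * v)^4
     = (2* v + \<i>*(1 - 2*\<mu>))^2 * (2* of_real pi)^2 * rGamma (1 + (2*\<i>)* v)^2 * rGamma (1 + (-2*\<i>)* v)^2 * Gamma (1 + (-\<i>)* v)^4"
    unfolding sh g1 by (simp add: power_mult_distrib power2_eq_square power4_eq_xxxx algebra_simps)
  show ?thesis
    unfolding XF_def Let_def v_def[symmetric] pow16 D1
    by (simp add: F1_def v_def)
qed

lemma gen1:
  fixes l \<psi>a \<psi>b y \<gamma> p P C cc t :: complex
  assumes y: "y \<noteq> 0" and cc: "cc \<noteq> 0" and a: "\<psi>a = \<psi>b - p * t + 2 / y" and C: "C + 1 = 2 * cc^2"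
  shows "8 * (\<i> * l) - 2 * (\<i> * \<psi>a) - 2 * (\<i> * \<psi>b) - (4 / (\<i> * y) + 4 * (\<i> * \<gamma>))
     + (p * P + 2 * p * (C + 1)) / (2 * C + 2)
     = - (2 * \<i> * (2 * \<gamma> - 4 * l + \<i> * p / 2 + 2 * \<psi>b - p * t + \<i> * p * P / (8 * cc ^ 2)))"
proof -
  have C2: "2 * C + 2 = 4 * cc^2"
  proof -
    have "2 * C + 2 = 2 * (C + 1)" by (simp add: algebra_simps)
    also have "\<dots> = 4 * cc^2" using C by simp
    finally show ?thesis .
  qed
  have i4: "4 / (\<i> * y) = - 4 * \<i> / y" by (simp add: divide_inverse inverse_mult_distrib)
  show ?thesis unfolding C2 C a i4 using y cc
    by (simp add: field_simps power2_eq_square)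
qed

lemma part1:
  assumes h: "\<forall>k::int. 2 * \<mu> \<noteq> of_int (2 * k + 1)"
  shows "\<exists>c :: nat \<Rightarrow> complex. \<exists>r::real > 0.
         c 0 = 0 \<and>
         c 1 = 2 * euler_mascheroni - 4 * complex_of_real (ln 2) + \<i> * complex_of_real pi / 2
               + 2 * Digamma (\<mu> + 1/2)
               - complex_of_real pi * tan (complex_of_real pi * \<mu>)
               + \<i> * complex_of_real pi * (px1 - p01) / (8 * cos (complex_of_real pi * \<mu>) ^ 2) \<and>
         (\<forall>\<nu>::real. \<nu> \<noteq> 0 \<and> \<bar>\<nu>\<bar> < r \<longrightarrow>
            (\<exists>s. (\<lambda>n. c n * complex_of_real \<nu> ^ n) sums s \<and>
                 exp (- 2 * \<i> * s) = XF \<mu> px1 p01 \<nu>))"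
proof -
  note f = part1_facts[OF h]
  have bI: "\<mu> + 1/2 \<notin> \<int>\<^sub>\<le>\<^sub>0" using f(1) nonpos_Ints_subset_Ints by blast
  have aI: "3/2 - \<mu> \<notin> \<int>\<^sub>\<le>\<^sub>0" using f(2) nonpos_Ints_subset_Ints by blast
  have cI: "1/2 - \<mu> \<notin> \<int>\<^sub>\<le>\<^sub>0" using f(3) nonpos_Ints_subset_Ints by blast
  have cos2: "cos (2 * complex_of_real pi * \<mu>) + 1 = 2 * cos (complex_of_real pi * \<mu>)^2"
    using cos_double_cos[of "complex_of_real pi * \<mu>"] by (simp add: mult.assoc)
  have C: "cos (2 * complex_of_real pi * \<mu>) + 1 \<noteq> 0" using f(5) by (simp add: cos2)
  have sinb: "sin (of_real pi * (\<mu> + 1/2)) = cos (of_real pi * \<mu>)"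
    by (simp add: distrib_left sin_add sin_pi_half_c cos_pi_half_c)
  have cosb: "cos (of_real pi * (\<mu> + 1/2)) = - sin (of_real pi * \<mu>)"
    by (simp add: distrib_left cos_add sin_pi_half_c cos_pi_half_c)
  have GG: "Gamma (3/2 - \<mu>) * Gamma (\<mu> + 1/2) = (1/2 - \<mu>) * of_real pi / cos (of_real pi * \<mu>)"
  proof -
    have ee: "(1/2 - \<mu>) + 1 = 3/2 - \<mu>" by simp
    have e1: "Gamma (3/2 - \<mu>) = (1/2 - \<mu>) * Gamma (1/2 - \<mu>)"
      using Gamma_plus1[OF cI] unfolding ee .
    have ee2: "1 - (\<mu> + 1/2) = 1/2 - \<mu>" by simp
    have e2: "Gamma (\<mu> + 1/2) * Gamma (1/2 - \<mu>) = of_real pi / cos (of_real pi * \<mu>)"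
      using Gamma_reflection_complex[of "\<mu> + 1/2"] unfolding ee2 sinb .
    show ?thesis unfolding e1 using e2 by (metis mult.assoc mult.commute times_divide_eq_right)
  qed
  define F where "F = F1 \<mu> px1 p01"
  have F0: "F 0 = 1"
  proof -
    have "F 0 = - (4 * (Gamma (3/2 - \<mu>) * Gamma (\<mu> + 1/2))^2) / ((\<i> * (1 - 2*\<mu>))^2 * (2 * of_real pi)^2)
        * (cos (2 * complex_of_real pi * \<mu>) + 1) * 2"
      by (simp add: F_def F1_def power_mult_distrib algebra_simps)
    also have "\<dots> = 1"
    proof -
      have gen: "- (4 * (y/2 * p / c)^2) / ((\<i> * y)^2 * (2 * p)^2) * (2 * c^2) * 2 = 1"
        if "y \<noteq> 0" "p \<noteq> 0" "c \<noteq> 0" for y p c :: complex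
        using that by (simp add: field_simps power2_eq_square)
      have hh: "1/2 - \<mu> = (1 - 2*\<mu>)/2" by simp
      show ?thesis unfolding GG cos2 hh using gen[OF f(4) _ f(5), of "of_real pi"] by simp
    qed
    finally show ?thesis .
  qed
  have an: "F analytic_on {0}"
    unfolding F_def F1_def[abs_def] using aI bI f(4) by (intro analytic_intros) auto
  define c1 where "c1 = 2 * euler_mascheroni - 4 * complex_of_real (ln 2) + \<i> * complex_of_real pi / 2
               + 2 * Digamma (\<mu> + 1/2)
               - complex_of_real pi * tan (complex_of_real pi * \<mu>)
               + \<i> * complex_of_real pi * (px1 - p01) / (8 * cos (complex_of_real pi * \<mu>) ^ 2)"
  define L where "L = - 2 * \<i> * c1"
  have f4': "2 * \<mu> \<noteq> 1" using f(4) by auto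
  have C2m: "cos (2 * complex_of_real pi * \<mu>) = 2 * cos (complex_of_real pi * \<mu>)^2 - 1"
    using cos2 by (simp add: algebra_simps)
  have DA: "Digamma (3/2 - \<mu>) = Digamma (\<mu> + 1/2) - of_real pi * (sin (of_real pi * \<mu>) / cos (of_real pi * \<mu>)) + 2 / (1 - 2*\<mu>)"
  proof -
    have ee: "(1/2 - \<mu>) + 1 = 3/2 - \<mu>" by simp
    have nz: "1/2 - \<mu> \<noteq> 0"
    proof
      assume "1/2 - \<mu> = 0"
      hence "2 * \<mu> = 1" by (simp add: algebra_simps)
      thus False using f4' by simp
    qed
    have p1: "Digamma (3/2 - \<mu>) = Digamma (1/2 - \<mu>) + 1/(1/2 - \<mu>)"
      using Digamma_plus1[OF nz] unfolding ee .
    have ee2: "1 - (\<mu> + 1/2) = 1/2 - \<mu>" by simp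
    have p2: "Digamma (1/2 - \<mu>) - Digamma (\<mu> + 1/2) = of_real pi * cot (of_real pi * (\<mu> + 1/2))"
      using Digamma_refl[OF f(1)] unfolding ee2 .
    have p3: "cot (of_real pi * (\<mu> + 1/2)) = - (sin (of_real pi * \<mu>) / cos (of_real pi * \<mu>))"
      unfolding cot_def sinb cosb by simp
    have p4: "1/(1/2 - \<mu>) = 2 / (1 - 2*\<mu>)" using nz f(4) by (simp add: field_simps)
    show ?thesis using p1 p2 p3 p4 by (simp add: algebra_simps)
  qed
  have LD: "LD F 0 L"
    unfolding F_def F1_def[abs_def]
    apply (rule LD_cong)
     apply ((rule LD_const LD_divide LD_minus LD_mult LD_power LD_Gamma_lin LD_rGamma_lin LD_exp_lin LD_poly LD_B) | (simp add: aI bI f(4) f4' C))+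
    apply (simp add: L_def)
    unfolding c1_def
    apply (rule gen1[OF f(4) f(5) _ cos2])
    apply (simp add: DA tan_def)
    done
  have c0: "exp (- 2*\<i> * 0) = F 0"
    by (simp add: F0)
  obtain c r where cr: "r > 0" "c 0 = 0" "c 1 = L / (- 2*\<i>)"
    "\<forall>z. norm z < r \<longrightarrow> (\<exists>s. (\<lambda>n. c n * z^n) sums s \<and> exp (- 2*\<i> * s) = F z)"
    using log_expansion[OF an _ _ c0 LD] F0 by auto
  show ?thesis
  proof (intro exI[of _ c] exI[of _ r] conjI allI impI)
    have "c 1 = c1" using cr(3) by (simp add: L_def)
    then show "c 1 = 2 * euler_mascheroni - 4 * complex_of_real (ln 2) + \<i> * complex_of_real pi / 2
               + 2 * Digamma (\<mu> + 1/2)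
               - complex_of_real pi * tan (complex_of_real pi * \<mu>)
               + \<i> * complex_of_real pi * (px1 - p01) / (8 * cos (complex_of_real pi * \<mu>) ^ 2)"
      by (simp only: c1_def)
    fix \<nu> :: real assume a: "\<nu> \<noteq> 0 \<and> \<bar>\<nu>\<bar> < r"
    then obtain s where "(\<lambda>n. c n * complex_of_real \<nu>^n) sums s" "exp (- 2*\<i> * s) = F (of_real \<nu>)"
      using cr(4)[rule_format, of "of_real \<nu>"] by auto
    moreover have "F (of_real \<nu>) = XF \<mu> px1 p01 \<nu>"
      using XF_eq[of \<nu> \<mu> px1 p01] a by (simp add: F_def)
    ultimately show "\<exists>s. (\<lambda>n. c n * complex_of_real \<nu> ^ n) sums s \<and> exp (- 2 * \<i> * s) = XF \<mu> px1 p01 \<nu>"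
      by auto
  qed (use cr in auto)
qed

theorem proposition11:
  fixes \<mu> px1 p01 :: complex
  shows
   "((\<forall>k::int. 2 * \<mu> \<noteq> of_int (2 * k + 1)) \<longrightarrow>
      (\<exists>c :: nat \<Rightarrow> complex. \<exists>r::real > 0.
         c 0 = 0 \<and>
         c 1 = 2 * euler_mascheroni - 4 * complex_of_real (ln 2) + \<i> * complex_of_real pi / 2
               + 2 * Digamma (\<mu> + 1/2)
               - complex_of_real pi * tan (complex_of_real pi * \<mu>)
               + \<i> * complex_of_real pi * (px1 - p01) / (8 * cos (complex_of_real pi * \<mu>) ^ 2) \<and>
         (\<forall>\<nu>::real. \<nu> \<noteq> 0 \<and> \<bar>\<nu>\<bar> < r \<longrightarrow>
            (\<exists>s. (\<lambda>n. c n * complex_of_real \<nu> ^ n) sums s \<and>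
                 exp (- 2 * \<i> * s) = XF \<mu> px1 p01 \<nu>))))
    \<and>
    (\<forall>m::int. m \<ge> 1 \<and> px1 \<noteq> 2 \<longrightarrow>
      (\<exists>c :: nat \<Rightarrow> complex. \<exists>r::real > 0.
         c 0 = - (\<i> / 2) * Ln ((2 - px1) / 4) \<and>
         c 1 = 2 * (Digamma (of_int m) + euler_mascheroni - 2 * complex_of_real (ln 2)) \<and>
         (\<forall>\<nu>::real. \<nu> \<noteq> 0 \<and> \<bar>\<nu>\<bar> < r \<longrightarrow>
            (\<exists>s. (\<lambda>n. c n * complex_of_real \<nu> ^ n) sums s \<and>
                 exp (2 * \<i> * s) = XD1 m px1 \<nu>))))
    \<and>
    (\<forall>m::int. m \<le> 0 \<and> px1 \<noteq> 2 \<longrightarrow>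
      (\<exists>c :: nat \<Rightarrow> complex. \<exists>r::real > 0.
         c 0 = (\<i> / 2) * Ln ((2 - px1) / 4) \<and>
         c 1 = 2 * (Digamma (1 - of_int m) + euler_mascheroni - 2 * complex_of_real (ln 2)) \<and>
         (\<forall>\<nu>::real. \<nu> \<noteq> 0 \<and> \<bar>\<nu>\<bar> < r \<longrightarrow>
            (\<exists>s. (\<lambda>n. c n * complex_of_real \<nu> ^ n) sums s \<and>
                 exp (- 2 * \<i> * s) = XD2 m px1 \<nu>))))"
proof (intro conjI impI allI)
  assume "\<forall>k::int. 2 * \<mu> \<noteq> of_int (2 * k + 1)"
  from part1[OF this, of px1 p01] show "\<exists>c :: nat \<Rightarrow> complex. \<exists>r::real > 0.
         c 0 = 0 \<and>
         c 1 = 2 * euler_mascheroni - 4 * complex_of_real (ln 2) + \<i> * complex_of_real pi / 2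
               + 2 * Digamma (\<mu> + 1/2)
               - complex_of_real pi * tan (complex_of_real pi * \<mu>)
               + \<i> * complex_of_real pi * (px1 - p01) / (8 * cos (complex_of_real pi * \<mu>) ^ 2) \<and>
         (\<forall>\<nu>::real. \<nu> \<noteq> 0 \<and> \<bar>\<nu>\<bar> < r \<longrightarrow>
            (\<exists>s. (\<lambda>n. c n * complex_of_real \<nu> ^ n) sums s \<and>
                 exp (- 2 * \<i> * s) = XF \<mu> px1 p01 \<nu>))" .
next
  fix m :: int assume "m \<ge> 1 \<and> px1 \<noteq> 2"
  then have hm: "m \<ge> 1" "px1 \<noteq> 2" by auto
  from part2[OF hm] show "\<exists>c :: nat \<Rightarrow> complex. \<exists>r::real > 0.
         c 0 = - (\<i> / 2) * Ln ((2 - px1) / 4) \<and>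
         c 1 = 2 * (Digamma (of_int m) + euler_mascheroni - 2 * complex_of_real (ln 2)) \<and>
         (\<forall>\<nu>::real. \<nu> \<noteq> 0 \<and> \<bar>\<nu>\<bar> < r \<longrightarrow>
            (\<exists>s. (\<lambda>n. c n * complex_of_real \<nu> ^ n) sums s \<and>
                 exp (2 * \<i> * s) = XD1 m px1 \<nu>))"
    .
next
  fix m :: int assume "m \<le> 0 \<and> px1 \<noteq> 2"
  then have hm: "m \<le> 0" "px1 \<noteq> 2" by auto
  from part3[OF hm] show "\<exists>c :: nat \<Rightarrow> complex. \<exists>r::real > 0.
         c 0 = (\<i> / 2) * Ln ((2 - px1) / 4) \<and>
         c 1 = 2 * (Digamma (1 - of_int m) + euler_mascheroni - 2 * complex_of_real (ln 2)) \<and>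
         (\<forall>\<nu>::real. \<nu> \<noteq> 0 \<and> \<bar>\<nu>\<bar> < r \<longrightarrow>
            (\<exists>s. (\<lambda>n. c n * complex_of_real \<nu> ^ n) sums s \<and>
                 exp (- 2 * \<i> * s) = XD2 m px1 \<nu>))"
    .
qed

end
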